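(* Under the Setting and Algorithm in the context, suppose $$\frac{N-s+1}{2}\min_{k\in\mathcal N}\gamma_k\eta_k>D_{\mathcal X}^2+\frac12\sum_{k\in\mathcal B}\gamma_k^2L_f^2+\frac12\sum_{k\in\mathcal N}\gamma_k^2L_{g,\mathcal X}^2.$$ Then $\mathcal B\neq\emptyset$ (so $\bar x_{N,s}$ is well defined), and moreover either (i) $|\mathcal B|\ge(N-s+1)/2$, or (ii) $\sum_{k\in\mathcal B}\gamma_k\langle f'(x_k),x_k-x^*\rangle<0$.
   Context: Setting. $\mathcal X\subset\mathbb R^n$ is convex and compact; $f:\mathcal X\to\mathbb R$ is convex and $L_f$-Lipschitz; $\Delta\subset\mathbb R^d$ is compact; $g:\mathcal X\times\Delta\to\mathbb R$ is such that for every $\delta\in\Delta$, $x\mapsto g(x,\delta)$ is convex and $L_{g,\mathcal X}$-Lipschitz, and for every $x\in\mathcal X$, $\delta\mapsto g(x,\delta)$ is $L_{g,\Delta}$-Lipschitz. Let $G(x):=\max_{\delta\in\Delta}g(x,\delta)$ and assume the problem $\min_{x\in\mathcal X}\{f(x):G(x)\le0\}$ has an optimal solution $x^*$. Norms are Euclidean. $f'(x)$ denotes a subgradient of $f$ at $x$ and $g'(x,\delta)$ a subgradient of $g(\cdot,\delta)$ at $x$. Let $\omega_{\mathcal X}:\mathcal X\to\mathbb R$ be continuously differentiable and $1$-strongly convex; $V(x,z):=\omega_{\mathcal X}(z)-\omega_{\mathcal X}(x)-\langle\nabla\omega_{\mathcal X}(x),z-x\rangle$; prox-mapping $P_{x,\mathcal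 X}(y):=\arg\min_{z\in\mathcal X}\{\langle y,z\rangle+V(x,z)\}$; $D_{\mathcal X}:=\sqrt{\max_{x,z\in\mathcal X}V(x,z)}$. Algorithm (inexact CSA). Inputs: $N\ge1$, $x_1\in\mathcal X$, tolerances $\eta_k>0$, step-sizes $\gamma_k>0$. For $k=1,\dots,N$: choose some $\delta_k\in\Delta$ (an approximate maximizer of $g(x_k,\cdot)$); set $h_k=f'(x_k)$ if $g(x_k,\delta_k)\le\eta_k$ and $h_k=g'(x_k,\delta_k)$ otherwise; set $x_{k+1}=P_{x_k,\mathcal X}(\gamma_kh_k)$. For $1\le s\le N$ let $I=\{s,\dots,N\}$, $\mathcal B:=\{k\in I: g(x_k,\delta_k)\le\eta_k\}$, $\mathcal N:=I\setminus\mathcal B$, and output $\bar x_{N,s}:=\sum_{k\in\mathcal B}\gamma_kx_k/\sum_{k\in\mathcal B}\gamma_k$. (The minimum over an empty set is $+\infty$.) *)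

theory Defs
  imports "HOL-Analysis.Analysis"
begin

definition strongly_convex1_on :: "'a::real_normed_vector set \<Rightarrow> ('a \<Rightarrow> real) \<Rightarrow> bool" where
  "strongly_convex1_on S w \<longleftrightarrow>
     (\<forall>x\<in>S. \<forall>y\<in>S. \<forall>t::real. 0 \<le> t \<and> t \<le> 1 \<longrightarrow>
        w (t *\<^sub>R x + (1 - t) *\<^sub>R y)
          \<le> t * w x + (1 - t) * w y - (1/2) * t * (1 - t) * (norm (x - y))\<^sup>2)"

definition bregman :: "('a::real_inner \<Rightarrow> real) \<Rightarrow> ('a \<Rightarrow> 'a) \<Rightarrow> 'a \<Rightarrow> 'a \<Rightarrow> real" where
  "bregman w dw x z = w z - w x - dw x \<bullet> (z - x)"

definition is_prox :: "('a::real_inner \<Rightarrow> real) \<Rightarrow> ('a \<Rightarrow> 'a) \<Rightarrow> 'a set \<Rightarrow> 'a \<Rightarrow> 'a \<Rightarrow> 'a \<Rightarrow> bool" where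
  "is_prox w dw X x y p \<longleftrightarrow> p \<in> X \<and>
     (\<forall>z\<in>X. y \<bullet> p + bregman w dw x p \<le> y \<bullet> z + bregman w dw x z)"

definition Dsq :: "('a::real_inner \<Rightarrow> real) \<Rightarrow> ('a \<Rightarrow> 'a) \<Rightarrow> 'a set \<Rightarrow> real" where
  "Dsq w dw X = (SUP p \<in> X \<times> X. bregman w dw (fst p) (snd p))"

definition is_subgrad_on :: "'a::real_inner set \<Rightarrow> ('a \<Rightarrow> real) \<Rightarrow> 'a \<Rightarrow> 'a \<Rightarrow> bool" where
  "is_subgrad_on S f x v \<longleftrightarrow> (\<forall>y\<in>S. f y \<ge> f x + v \<bullet> (y - x))"

end

theory Submission
  imports Defs
begin

lemma deriv_nonpos:
  fixes psi :: "real \<Rightarrow> real"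
  assumes "(psi has_real_derivative l) (at 0 within {0..1})" "\<forall>t\<in>{0..1}. psi t \<le> psi 0"
  shows "l \<le> 0"
proof (rule ccontr)
  assume "\<not> l \<le> 0" hence "0 < l" by simp
  from has_real_derivative_pos_inc_right[OF assms(1) this] obtain d where
    d: "d>0" "\<forall>h>0. 0 + h \<in> {0..1} \<longrightarrow> h < d \<longrightarrow> psi 0 < psi (0+h)" by blast
  let ?h = "min (d/2) 1"
  have "psi 0 < psi ?h" using d by auto
  moreover have "psi ?h \<le> psi 0" using assms(2) d by auto
  ultimately show False by simp
qed

lemma seg_in:
  assumes "convex X" "a\<in>X" "b\<in>X" "0 \<le> t" "t \<le> 1"
  shows "a + t *\<^sub>R (b - a) \<in> X"
proof -
  have "a + t *\<^sub>R (b - a) = (1 - t) *\<^sub>R a + t *\<^sub>R b" by (simp add: algebra_simps)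
  thus ?thesis using convexD[OF assms(1) assms(2) assms(3), of "1-t" t] assms by simp
qed

lemma seg_deriv:
  fixes w :: "'a::real_inner \<Rightarrow> real"
  assumes "(w has_derivative (\<lambda>h. D \<bullet> h)) (at a within X)" "convex X" "a\<in>X" "b\<in>X"
  shows "((\<lambda>t. w (a + t *\<^sub>R (b - a))) has_real_derivative (D \<bullet> (b - a))) (at 0 within {0..1})"
proof -
  have 1: "((\<lambda>t::real. a + t *\<^sub>R (b - a)) has_derivative (\<lambda>t. t *\<^sub>R (b - a))) (at 0 within {0..1})"
    by (intro derivative_eq_intros) auto
  have sub: "(\<lambda>t. a + t *\<^sub>R (b - a)) ` {0..1} \<subseteq> X" using seg_in[OF assms(2-4)] by auto
  have 2: "(w has_derivative (\<lambda>h. D \<bullet> h)) (at ((\<lambda>t. a + t *\<^sub>R (b - a)) 0) within (\<lambda>t. a + t *\<^sub>R (b - a)) ` {0..1})"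
    using has_derivative_subset[OF assms(1) sub] by simp
  from diff_chain_within[OF 1 2] 
  have "((w \<circ> (\<lambda>t. a + t *\<^sub>R (b - a))) has_derivative ((\<lambda>h. D \<bullet> h) \<circ> (\<lambda>t. t *\<^sub>R (b - a)))) (at 0 within {0..1})" .
  moreover have "((\<lambda>h. D \<bullet> h) \<circ> (\<lambda>t. t *\<^sub>R (b - a))) = (*) (D \<bullet> (b - a))"
    by (auto simp: o_def fun_eq_iff)
  ultimately show ?thesis unfolding has_field_derivative_def by (simp add: o_def)
qed

lemma sc_lower:
  fixes w :: "'a::real_inner \<Rightarrow> real"
  assumes sc: "strongly_convex1_on X w" and cx: "convex X"
    and d: "(w has_derivative (\<lambda>h. dw x \<bullet> h)) (at x within X)" and x: "x\<in>X" and p: "p \<in> X"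
  shows "(1/2) * (norm (p - x))\<^sup>2 \<le> bregman w dw x p"
proof -
  define K where "K = (norm (p - x))\<^sup>2"
  define psi where "psi t = w (x + t *\<^sub>R (p - x)) - t * (w p - w x) + (1/2) * K * (t * (1 - t))" for t
  have "(psi has_real_derivative (dw x \<bullet> (p - x) - (w p - w x) + (1/2) * K * (1 * (1 - 0) + 0 * (-1)))) (at 0 within {0..1})"
    unfolding psi_def
    by (intro derivative_eq_intros seg_deriv[OF d cx x p]) (auto intro: seg_deriv[OF d cx x p])
  moreover have "\<forall>t\<in>{0..1}. psi t \<le> psi 0"
  proof
    fix t :: real assume t: "t \<in> {0..1}"
    have e: "t *\<^sub>R p + (1 - t) *\<^sub>R x = x + t *\<^sub>R (p - x)" by (simp add: algebra_simps)
    have "w (t *\<^sub>R p + (1 - t) *\<^sub>R x) \<le> t * w p + (1 - t) * w x - (1/2) * t * (1 - t) * (norm (p - x))\<^sup>2"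
      using sc p x t unfolding strongly_convex1_on_def by auto
    thus "psi t \<le> psi 0" unfolding psi_def K_def e by (simp add: algebra_simps)
  qed
  ultimately have "dw x \<bullet> (p - x) - (w p - w x) + (1/2) * K * (1 * (1 - 0) + 0 * (-1)) \<le> 0"
    by (rule deriv_nonpos)
  thus ?thesis unfolding bregman_def K_def by simp
qed

lemma prox_fo:
  fixes w :: "'a::real_inner \<Rightarrow> real"
  assumes cx: "convex X" and p: "p\<in>X" and z: "z\<in>X"
    and d: "(w has_derivative (\<lambda>h. dw p \<bullet> h)) (at p within X)"
    and pr: "is_prox w dw X x y p"
  shows "0 \<le> (y + dw p - dw x) \<bullet> (z - p)"
proof -
  define c where "c = (y - dw x) \<bullet> (z - p)"
  define psi where "psi t = - (t * c + w (p + t *\<^sub>R (z - p)))" for t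
  have "(psi has_real_derivative (- (1 * c + dw p \<bullet> (z - p)))) (at 0 within {0..1})"
    unfolding psi_def
    by (intro derivative_eq_intros seg_deriv[OF d cx p z]) (auto intro: seg_deriv[OF d cx p z])
  moreover have "\<forall>t\<in>{0..1}. psi t \<le> psi 0"
  proof
    fix t :: real assume t: "t \<in> {0..1}"
    define q where "q = p + t *\<^sub>R (z - p)"
    have "q \<in> X" unfolding q_def using seg_in[OF cx p z] t by auto
    hence "y \<bullet> p + bregman w dw x p \<le> y \<bullet> q + bregman w dw x q" using pr unfolding is_prox_def by auto
    hence "0 \<le> y \<bullet> (q - p) + w q - w p - dw x \<bullet> (q - p)"
      unfolding bregman_def by (simp add: inner_diff_right algebra_simps)
    moreover have "q - p = t *\<^sub>R (z - p)" unfolding q_def by simp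
    ultimately show "psi t \<le> psi 0" unfolding psi_def c_def q_def
      by (simp add: inner_diff_left algebra_simps)
  qed
  ultimately have "- (1 * c + dw p \<bullet> (z - p)) \<le> 0" by (rule deriv_nonpos)
  thus ?thesis unfolding c_def by (simp add: inner_diff_left inner_add_left)
qed

lemma step_ineq:
  fixes w :: "'a::real_inner \<Rightarrow> real"
  assumes sc: "strongly_convex1_on X w" and cx: "convex X"
    and xk: "xk \<in> X" and p: "p \<in> X" and z: "z \<in> X"
    and dx: "(w has_derivative (\<lambda>h. dw xk \<bullet> h)) (at xk within X)"
    and dp: "(w has_derivative (\<lambda>h. dw p \<bullet> h)) (at p within X)"
    and pr: "is_prox w dw X xk (gam *\<^sub>R h) p" and gam: "gam \<ge> 0"
  shows "gam * (h \<bullet> (xk - z)) \<le> bregman w dw xk z - bregman w dw p z + gam\<^sup>2 * (norm h)\<^sup>2 / 2"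
proof -
  have fo: "0 \<le> (gam *\<^sub>R h + dw p - dw xk) \<bullet> (z - p)" by (rule prox_fo[OF cx p z dp pr])
  have tp: "(dw p - dw xk) \<bullet> (z - p) = bregman w dw xk z - bregman w dw p z - bregman w dw xk p"
    unfolding bregman_def by (simp add: inner_diff_left inner_diff_right algebra_simps)
  have a: "gam * (h \<bullet> (p - z)) \<le> bregman w dw xk z - bregman w dw p z - bregman w dw xk p"
    using fo tp by (simp add: inner_add_left inner_diff_left inner_diff_right algebra_simps)
  have b: "(1/2) * (norm (p - xk))\<^sup>2 \<le> bregman w dw xk p" using sc_lower[of X w dw xk p] sc cx dx xk p by blast
  have "h \<bullet> (xk - p) \<le> norm h * norm (xk - p)" by (rule norm_cauchy_schwarz)
  hence c: "gam * (h \<bullet> (xk - p)) \<le> gam * (norm h * norm (xk - p))" using gam by (rule mult_left_mono)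
  have "0 \<le> (gam * norm h - norm (xk - p))\<^sup>2" by simp
  hence d: "gam * (norm h * norm (xk - p)) \<le> gam\<^sup>2 * (norm h)\<^sup>2 / 2 + (1/2) * (norm (p - xk))\<^sup>2"
    by (simp add: power2_eq_square algebra_simps norm_minus_commute)
  have "h \<bullet> (xk - z) = h \<bullet> (xk - p) + h \<bullet> (p - z)" by (simp add: inner_diff_right)
  hence "gam * (h \<bullet> (xk - z)) = gam * (h \<bullet> (xk - p)) + gam * (h \<bullet> (p - z))" by (simp add: algebra_simps)
  thus ?thesis using a b c d by linarith
qed

theorem mainTheorem16:
  fixes X :: "'a::euclidean_space set" and Delta :: "'b::euclidean_space set"
    and f :: "'a \<Rightarrow> real" and g :: "'a \<Rightarrow> 'b \<Rightarrow> real"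
    and fp :: "'a \<Rightarrow> 'a" and gp :: "'a \<Rightarrow> 'b \<Rightarrow> 'a"
    and Lf LgX LgD :: real
    and w :: "'a \<Rightarrow> real" and dw :: "'a \<Rightarrow> 'a"
    and xstar :: 'a
    and N s :: nat and x :: "nat \<Rightarrow> 'a" and delta :: "nat \<Rightarrow> 'b"
    and eta gamma :: "nat \<Rightarrow> real"
    and B NN :: "nat set"
  assumes X: "convex X" "compact X"
    and Delta: "compact Delta"
    and f_cvx: "convex_on X f" and f_lip: "Lf-lipschitz_on X f"
    and g_cvx: "\<And>d. d \<in> Delta \<Longrightarrow> convex_on X (\<lambda>y. g y d)"
    and g_lipX: "\<And>d. d \<in> Delta \<Longrightarrow> LgX-lipschitz_on X (\<lambda>y. g y d)"
    and g_lipD: "\<And>y. y \<in> X \<Longrightarrow> LgD-lipschitz_on Delta (\<lambda>d. g y d)"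
    and fp: "\<And>y. y \<in> X \<Longrightarrow> is_subgrad_on X f y (fp y) \<and> norm (fp y) \<le> Lf"
    and gp: "\<And>y d. y \<in> X \<Longrightarrow> d \<in> Delta \<Longrightarrow>
               is_subgrad_on X (\<lambda>z. g z d) y (gp y d) \<and> norm (gp y d) \<le> LgX"
    and opt: "xstar \<in> X" "(SUP d\<in>Delta. g xstar d) \<le> 0"
        "\<And>y. y \<in> X \<Longrightarrow> (SUP d\<in>Delta. g y d) \<le> 0 \<Longrightarrow> f xstar \<le> f y"
    and w_diff: "\<And>y. y \<in> X \<Longrightarrow> (w has_derivative (\<lambda>h. dw y \<bullet> h)) (at y within X)"
    and w_cont: "continuous_on X dw"
    and w_sc: "strongly_convex1_on X w"
    and N: "N \<ge> 1" and s: "1 \<le> s" "s \<le> N"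
    and x1: "x 1 \<in> X"
    and eta: "\<And>k. eta k > 0" and gamma: "\<And>k. gamma k > 0"
    and delta: "\<And>k. delta k \<in> Delta"
    and step: "\<And>k. 1 \<le> k \<Longrightarrow> k \<le> N \<Longrightarrow>
        is_prox w dw X (x k)
          (gamma k *\<^sub>R (if g (x k) (delta k) \<le> eta k then fp (x k) else gp (x k) (delta k)))
          (x (Suc k))"
    and B_def: "B = {k \<in> {s..N}. g (x k) (delta k) \<le> eta k}"
    and NN_def: "NN = {s..N} - B"
    and cond: "NN = {} \<or>
        real (N - s + 1) / 2 * Min ((\<lambda>k. gamma k * eta k) ` NN)
          > Dsq w dw X + (1/2) * (\<Sum>k\<in>B. (gamma k)\<^sup>2 * Lf\<^sup>2)
                       + (1/2) * (\<Sum>k\<in>NN. (gamma k)\<^sup>2 * LgX\<^sup>2)"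
  shows "B \<noteq> {} \<and>
    (real (card B) \<ge> real (N - s + 1) / 2 \<or>
     (\<Sum>k\<in>B. gamma k * (fp (x k) \<bullet> (x k - xstar))) < 0)"
proof (rule ccontr)
  assume neg: "\<not> ?thesis"
  define h where "h k = (if g (x k) (delta k) \<le> eta k then fp (x k) else gp (x k) (delta k))" for k
  define V where "V = bregman w dw"
  have xin: "x k \<in> X" if "1 \<le> k" "k \<le> Suc N" for k
    using that
  proof (induction k)
    case 0 thus ?case by simp
  next
    case (Suc k)
    show ?case
    proof (cases "k = 0")
      case True thus ?thesis using x1 by simp
    next
      case False
      hence "1 \<le> k" "k \<le> N" using Suc.prems by auto
      from step[OF this] show ?thesis unfolding is_prox_def by blast
    qed
  qed
  have fin: "finite {s..N}" by simp
  have BNN: "{s..N} = B \<union> NN" "B \<inter> NN = {}" unfolding NN_def B_def by auto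
  have finB: "finite B" and finNN: "finite NN" using BNN fin by (metis finite_Un)+
  have stepk: "gamma k * (h k \<bullet> (x k - xstar)) \<le> V (x k) xstar - V (x (Suc k)) xstar + (gamma k)\<^sup>2 * (norm (h k))\<^sup>2 / 2"
    if k: "k \<in> {s..N}" for k
  proof -
    have k1: "1 \<le> k" "k \<le> N" using k s by auto
    have a: "x k \<in> X" "x (Suc k) \<in> X" using xin k1 by auto
    show ?thesis unfolding V_def
      apply (rule step_ineq[OF w_sc X(1) a opt(1) w_diff[OF a(1)] w_diff[OF a(2)]])
      using step[OF k1] gamma[of k] unfolding h_def by auto
  qed
  have tele: "(\<Sum>k\<in>{s..N}. V (x k) xstar - V (x (Suc k)) xstar) = V (x s) xstar - V (x (Suc N)) xstar"
  proof -
    have "(\<Sum>k\<in>{s..N}. V (x k) xstar - V (x (Suc k)) xstar)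
        = (\<Sum>k=s..<Suc N. (- V (x (Suc k)) xstar) - (- V (x k) xstar))"
      by (intro sum.cong) auto
    also have "\<dots> = - V (x (Suc N)) xstar - (- V (x s) xstar)"
      by (rule sum_Suc_diff') (use s in auto)
    finally show ?thesis by simp
  qed
  have Vend: "0 \<le> V (x (Suc N)) xstar"
  proof -
    have "x (Suc N) \<in> X" using xin N by auto
    from sc_lower[of X w dw "x (Suc N)" xstar, OF w_sc X(1) w_diff[OF this] this opt(1)]
    have "(1/2) * (norm (xstar - x (Suc N)))\<^sup>2 \<le> V (x (Suc N)) xstar" unfolding V_def .
    moreover have "0 \<le> (1/2) * (norm (xstar - x (Suc N)))\<^sup>2" by simp
    ultimately show ?thesis by linarith
  qed
  have Vstart: "V (x s) xstar \<le> Dsq w dw X"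
  proof -
    have wc: "continuous_on X w"
      using w_diff has_derivative_continuous continuous_on_eq_continuous_within by blast
    have c1: "continuous_on (X \<times> X) (\<lambda>q. w (snd q))"
      by (rule continuous_on_compose2[OF wc continuous_on_snd]) auto
    have c2: "continuous_on (X \<times> X) (\<lambda>q. w (fst q))"
      by (rule continuous_on_compose2[OF wc continuous_on_fst]) auto
    have c3: "continuous_on (X \<times> X) (\<lambda>q. dw (fst q))"
      by (rule continuous_on_compose2[OF w_cont continuous_on_fst]) auto
    have "continuous_on (X \<times> X) (\<lambda>q. bregman w dw (fst q) (snd q))"
      unfolding bregman_def by (intro continuous_intros c1 c2 c3)
    moreover have "compact (X \<times> X)" using X(2) X(2) by (rule compact_Times)
    ultimately have "compact ((\<lambda>q. bregman w dw (fst q) (snd q)) ` (X \<times> X))"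
      by (rule compact_continuous_image)
    hence bdd: "bdd_above ((\<lambda>q. bregman w dw (fst q) (snd q)) ` (X \<times> X))"
      by (intro bounded_imp_bdd_above compact_imp_bounded)
    have "x s \<in> X" using xin s by auto
    hence "(x s, xstar) \<in> X \<times> X" using opt(1) by simp
    from cSUP_upper[OF this bdd] show ?thesis unfolding Dsq_def V_def by simp
  qed
  define Sall where "Sall = (\<Sum>k\<in>{s..N}. gamma k * (h k \<bullet> (x k - xstar)))"
  have "Sall \<le> (\<Sum>k\<in>{s..N}. V (x k) xstar - V (x (Suc k)) xstar + (gamma k)\<^sup>2 * (norm (h k))\<^sup>2 / 2)"
    unfolding Sall_def by (rule sum_mono) (rule stepk)
  also have "\<dots> = V (x s) xstar - V (x (Suc N)) xstar + (\<Sum>k\<in>{s..N}. (gamma k)\<^sup>2 * (norm (h k))\<^sup>2 / 2)"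
    by (simp add: sum.distrib tele)
  also have "(\<Sum>k\<in>{s..N}. (gamma k)\<^sup>2 * (norm (h k))\<^sup>2 / 2)
      = (\<Sum>k\<in>B. (gamma k)\<^sup>2 * (norm (h k))\<^sup>2 / 2) + (\<Sum>k\<in>NN. (gamma k)\<^sup>2 * (norm (h k))\<^sup>2 / 2)"
    unfolding BNN(1) by (rule sum.union_disjoint[OF finB finNN BNN(2)])
  also have "(\<Sum>k\<in>B. (gamma k)\<^sup>2 * (norm (h k))\<^sup>2 / 2) \<le> (\<Sum>k\<in>B. (1/2) * ((gamma k)\<^sup>2 * Lf\<^sup>2))"
  proof (rule sum_mono)
    fix k assume k: "k \<in> B"
    hence k1: "1 \<le> k" "k \<le> N" and hk: "h k = fp (x k)" using s unfolding B_def h_def by auto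
    have "x k \<in> X" using xin k1 by auto
    hence "norm (h k) \<le> Lf" using fp hk by auto
    hence "(norm (h k))\<^sup>2 \<le> Lf\<^sup>2" by (intro power_mono) auto
    thus "(gamma k)\<^sup>2 * (norm (h k))\<^sup>2 / 2 \<le> (1/2) * ((gamma k)\<^sup>2 * Lf\<^sup>2)"
      by (simp add: mult_left_mono)
  qed
  also have "(\<Sum>k\<in>NN. (gamma k)\<^sup>2 * (norm (h k))\<^sup>2 / 2) \<le> (\<Sum>k\<in>NN. (1/2) * ((gamma k)\<^sup>2 * LgX\<^sup>2))"
  proof (rule sum_mono)
    fix k assume k: "k \<in> NN"
    hence k1: "1 \<le> k" "k \<le> N" and hk: "h k = gp (x k) (delta k)" using s unfolding NN_def B_def h_def by auto
    have "x k \<in> X" using xin k1 by auto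
    hence "norm (h k) \<le> LgX" using gp delta hk by auto
    hence "(norm (h k))\<^sup>2 \<le> LgX\<^sup>2" by (intro power_mono) auto
    thus "(gamma k)\<^sup>2 * (norm (h k))\<^sup>2 / 2 \<le> (1/2) * ((gamma k)\<^sup>2 * LgX\<^sup>2)"
      by (simp add: mult_left_mono)
  qed
  finally have upper: "Sall \<le> Dsq w dw X + (1/2) * (\<Sum>k\<in>B. (gamma k)\<^sup>2 * Lf\<^sup>2) + (1/2) * (\<Sum>k\<in>NN. (gamma k)\<^sup>2 * LgX\<^sup>2)"
    using Vstart Vend by (simp add: sum_distrib_left)
  have cardI: "card {s..N} = N - s + 1" using s by simp
  have cardU: "real (card B) + real (card NN) = real (N - s + 1)"
    using card_Un_disjoint[OF finB finNN BNN(2)] BNN(1) cardI by simp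
  have SB: "0 \<le> (\<Sum>k\<in>B. gamma k * (fp (x k) \<bullet> (x k - xstar)))"
    and cNN: "real (N - s + 1) / 2 \<le> real (card NN)"
  proof -
    have "0 \<le> (\<Sum>k\<in>B. gamma k * (fp (x k) \<bullet> (x k - xstar))) \<and> real (N - s + 1) / 2 \<le> real (card NN)"
    proof (cases "B = {}")
      case True thus ?thesis using cardU by simp
    next
      case False
      with neg have "real (card B) < real (N - s + 1) / 2"
        "0 \<le> (\<Sum>k\<in>B. gamma k * (fp (x k) \<bullet> (x k - xstar)))" by auto
      thus ?thesis using cardU by simp
    qed
    thus "0 \<le> (\<Sum>k\<in>B. gamma k * (fp (x k) \<bullet> (x k - xstar)))" "real (N - s + 1) / 2 \<le> real (card NN)"
      by auto
  qed
  have NNne: "NN \<noteq> {}" using cNN s by auto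
  define m where "m = Min ((\<lambda>k. gamma k * eta k) ` NN)"
  have mle: "m \<le> gamma k * eta k" if "k \<in> NN" for k
    unfolding m_def using finNN that by (intro Min_le) auto
  have mpos: "0 < m"
  proof -
    have "m \<in> (\<lambda>k. gamma k * eta k) ` NN" unfolding m_def using finNN NNne by (intro Min_in) auto
    thus ?thesis using gamma eta by (auto intro: mult_pos_pos)
  qed
  have cnd: "real (N - s + 1) / 2 * m > Dsq w dw X + (1/2) * (\<Sum>k\<in>B. (gamma k)\<^sup>2 * Lf\<^sup>2) + (1/2) * (\<Sum>k\<in>NN. (gamma k)\<^sup>2 * LgX\<^sup>2)"
    using cond NNne unfolding m_def by auto
  have gbdd: "g xstar d \<le> 0" if d: "d \<in> Delta" for d
  proof -
    have "continuous_on Delta (\<lambda>d. g xstar d)"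
      using g_lipD[OF opt(1)] by (rule lipschitz_on_continuous_on)
    hence "compact ((\<lambda>d. g xstar d) ` Delta)" using Delta by (intro compact_continuous_image)
    hence "bdd_above ((\<lambda>d. g xstar d) ` Delta)" by (intro bounded_imp_bdd_above compact_imp_bounded)
    from cSUP_upper[OF d this] opt(2) show ?thesis by linarith
  qed
  have NNstrict: "gamma k * eta k < gamma k * (h k \<bullet> (x k - xstar))" if k: "k \<in> NN" for k
  proof -
    have k1: "1 \<le> k" "k \<le> N" and hk: "h k = gp (x k) (delta k)" and gt: "eta k < g (x k) (delta k)"
      using k s unfolding NN_def B_def h_def by auto
    have xk: "x k \<in> X" using xin k1 by auto
    have "is_subgrad_on X (\<lambda>z. g z (delta k)) (x k) (gp (x k) (delta k))" using gp[OF xk delta] by auto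
    hence "g xstar (delta k) \<ge> g (x k) (delta k) + gp (x k) (delta k) \<bullet> (xstar - x k)"
      using opt(1) unfolding is_subgrad_on_def by auto
    moreover have "gp (x k) (delta k) \<bullet> (xstar - x k) = - (gp (x k) (delta k) \<bullet> (x k - xstar))"
      by (simp add: inner_diff_right)
    ultimately have "eta k < h k \<bullet> (x k - xstar)" using gbdd[OF delta[of k]] gt hk by simp
    thus ?thesis using gamma[of k] by simp
  qed
  have "real (N - s + 1) / 2 * m \<le> real (card NN) * m"
    using cNN mpos by (intro mult_right_mono) auto
  also have "\<dots> \<le> (\<Sum>k\<in>NN. gamma k * eta k)"
    using sum_bounded_below[of NN m "\<lambda>k. gamma k * eta k"] mle by auto
  also have "\<dots> < (\<Sum>k\<in>NN. gamma k * (h k \<bullet> (x k - xstar)))"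
    by (rule sum_strict_mono[OF finNN NNne NNstrict])
  also have "\<dots> \<le> Sall"
  proof -
    have "Sall = (\<Sum>k\<in>B. gamma k * (h k \<bullet> (x k - xstar))) + (\<Sum>k\<in>NN. gamma k * (h k \<bullet> (x k - xstar)))"
      unfolding Sall_def BNN(1) by (rule sum.union_disjoint[OF finB finNN BNN(2)])
    moreover have "(\<Sum>k\<in>B. gamma k * (h k \<bullet> (x k - xstar))) = (\<Sum>k\<in>B. gamma k * (fp (x k) \<bullet> (x k - xstar)))"
      by (intro sum.cong) (auto simp: h_def B_def)
    ultimately show ?thesis using SB by linarith
  qed
  finally show False using upper cnd by linarith
qed

end
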